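(* Let $\mathcal{U}$ be a finite set of users, each associated with a base station $b_u$, where each base station $b$ has a finite set of integer-indexed subchannels $\mathcal{C}_b$, and assume the number of users associated with each base station $b$ is at most $|\mathcal{C}_b|$. Some users are "ongoing", each having a previously used subchannel $\bar c_u\in\mathcal{C}_{b_u}$, where ongoing users associated with the same base station have pairwise distinct previous subchannels. For each $u$ let $\mathcal{C}^t_u=\{\bar c_u\}$ if $u$ is ongoing and $\mathcal{C}^t_u=\mathcal{C}_{b_u}$ otherwise. Call two distinct users $u,u'$ conflicting if $b_u=b_{u'}$, or if both are ongoing with $\bar c_u\neq\bar c_{u'}$. Let interference weights $i^t_{u,u'}$ satisfy $i^t_{u,u}=0$, $i^t_{u,u'}=+\infty$ for conflicting pairs, and $i^t_{u,u'}\in[0,\infty)$ otherwise. Then the problem (P3): minimize over $\boldsymbol{c}^t$ with $c^t_u\in\mathcal{C}^t_u$ for all $u$ the objective $\frac12\sum_{u,u'\in\mathcal{U}}\max\{0,1-|c^t_u-c^t_{u'}|\}\, i^t_{u,u'}$ (with $0\cdot\infty=0$), has a feasible solution with finite objective value.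
   Context: In the paper, the hypotheses on the number of users per base station and on the ongoing users are guaranteed by the preceding user-association step (which never associates more users with a base station than it has subchannels, and keeps ongoing users on their previous base station and subchannel). *)

theory Defs
  imports Complex_Main "HOL-Library.Extended_Real"
begin

definition cand_set :: "('u \<Rightarrow> 'b) \<Rightarrow> ('b \<Rightarrow> int set) \<Rightarrow> 'u set \<Rightarrow> ('u \<Rightarrow> int) \<Rightarrow> 'u \<Rightarrow> int set" where
  "cand_set bs C ong prev u = (if u \<in> ong then {prev u} else C (bs u))"

definition conflicting :: "('u \<Rightarrow> 'b) \<Rightarrow> 'u set \<Rightarrow> ('u \<Rightarrow> int) \<Rightarrow> 'u \<Rightarrow> 'u \<Rightarrow> bool" where
  "conflicting bs ong prev u v \<longleftrightarrow> u \<noteq> v \<and>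
     (bs u = bs v \<or> (u \<in> ong \<and> v \<in> ong \<and> prev u \<noteq> prev v))"

text \<open>Objective of (P3); extended reals, where 0 * \<infinity> = 0.\<close>
definition P3_obj :: "'u set \<Rightarrow> ('u \<Rightarrow> 'u \<Rightarrow> ereal) \<Rightarrow> ('u \<Rightarrow> int) \<Rightarrow> ereal" where
  "P3_obj U i c = ereal (1/2) *
     (\<Sum>u\<in>U. \<Sum>v\<in>U. ereal (max 0 (1 - \<bar>real_of_int (c u) - real_of_int (c v)\<bar>)) * i u v)"

end

theory Submission
  imports Defs
begin

theorem lemma2:
  fixes U :: "'u set" and bs :: "'u \<Rightarrow> 'b" and C :: "'b \<Rightarrow> int set"
    and ong :: "'u set" and prev :: "'u \<Rightarrow> int" and i :: "'u \<Rightarrow> 'u \<Rightarrow> ereal"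
  assumes finU: "finite U"
    and finC: "\<And>b. finite (C b)"
    and load: "\<And>b. card {u \<in> U. bs u = b} \<le> card (C b)"
    and ong_sub: "ong \<subseteq> U"
    and prev_in: "\<And>u. u \<in> ong \<Longrightarrow> prev u \<in> C (bs u)"
    and prev_dist: "\<And>u v. u \<in> ong \<Longrightarrow> v \<in> ong \<Longrightarrow> u \<noteq> v \<Longrightarrow> bs u = bs v \<Longrightarrow> prev u \<noteq> prev v"
    and i_diag: "\<And>u. u \<in> U \<Longrightarrow> i u u = 0"
    and i_conf: "\<And>u v. u \<in> U \<Longrightarrow> v \<in> U \<Longrightarrow> conflicting bs ong prev u v \<Longrightarrow> i u v = \<infinity>"
    and i_fin: "\<And>u v. u \<in> U \<Longrightarrow> v \<in> U \<Longrightarrow> u \<noteq> v \<Longrightarrow> \<not> conflicting bs ong prev u v \<Longrightarrow>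
                   0 \<le> i u v \<and> i u v < \<infinity>"
  shows "\<exists>c. (\<forall>u\<in>U. c u \<in> cand_set bs C ong prev u) \<and> P3_obj U i c < \<infinity>"
proof -
  define O' where "O' b = {u \<in> ong. bs u = b}" for b
  define A where "A b = {u \<in> U. bs u = b} - ong" for b
  define R where "R b = C b - prev ` O' b" for b
  have ex: "\<exists>f. inj_on f (A b) \<and> f ` A b \<subseteq> R b" for b
  proof -
    have fO: "finite (O' b)" using finU ong_sub unfolding O'_def by (auto intro: finite_subset)
    have injp: "inj_on prev (O' b)" using prev_dist unfolding O'_def inj_on_def by blast
    have sub1: "O' b \<subseteq> {u \<in> U. bs u = b}" using ong_sub unfolding O'_def by auto
    have sub2: "prev ` O' b \<subseteq> C b" using prev_in unfolding O'_def by auto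
    have eqA: "A b = {u \<in> U. bs u = b} - O' b" unfolding A_def O'_def by auto
    have "card (A b) = card {u \<in> U. bs u = b} - card (O' b)"
      unfolding eqA using sub1 fO by (simp add: card_Diff_subset)
    also have "\<dots> \<le> card (C b) - card (prev ` O' b)"
      using load[of b] card_image[OF injp] by simp
    also have "\<dots> = card (R b)" unfolding R_def using sub2 fO
      by (simp add: card_Diff_subset)
    finally have "card (A b) \<le> card (R b)" .
    moreover have "finite (A b)" using finU unfolding A_def by auto
    moreover have "finite (R b)" using finC unfolding R_def by auto
    ultimately show ?thesis using card_le_inj by blast
  qed
  then obtain f where f: "\<And>b. inj_on (f b) (A b) \<and> f b ` A b \<subseteq> R b" by metis
  define c where "c u = (if u \<in> ong then prev u else f (bs u) u)" for u
  have feas: "\<forall>u\<in>U. c u \<in> cand_set bs C ong prev u"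
  proof
    fix u assume u: "u \<in> U"
    show "c u \<in> cand_set bs C ong prev u"
    proof (cases "u \<in> ong")
      case True then show ?thesis by (simp add: c_def cand_set_def)
    next
      case False
      then have "u \<in> A (bs u)" using u unfolding A_def by auto
      then have "f (bs u) u \<in> R (bs u)" using f by blast
      then show ?thesis using False by (simp add: c_def cand_set_def R_def)
    qed
  qed
  have dist: "c u \<noteq> c v" if u: "u \<in> U" and v: "v \<in> U" and cf: "conflicting bs ong prev u v" for u v
  proof -
    have ne: "u \<noteq> v" using cf unfolding conflicting_def by blast
    show ?thesis
    proof (cases "u \<in> ong")
      case uo: True
      show ?thesis
      proof (cases "v \<in> ong")
        case True then show ?thesis using uo cf prev_dist[of u v] unfolding conflicting_def c_def by auto
      next
        case vn: False
        then have b: "bs u = bs v" using cf unfolding conflicting_def by auto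
        have "v \<in> A (bs v)" using v vn unfolding A_def by auto
        then have "f (bs v) v \<in> R (bs v)" using f by blast
        moreover have "prev u \<in> prev ` O' (bs v)" using uo b unfolding O'_def by auto
        ultimately show ?thesis using uo vn unfolding c_def R_def by auto
      qed
    next
      case un: False
      show ?thesis
      proof (cases "v \<in> ong")
        case vo: True
        then have b: "bs u = bs v" using cf un unfolding conflicting_def by auto
        have "u \<in> A (bs u)" using u un unfolding A_def by auto
        then have "f (bs u) u \<in> R (bs u)" using f by blast
        moreover have "prev v \<in> prev ` O' (bs u)" using vo b unfolding O'_def by auto
        ultimately show ?thesis using vo un unfolding c_def R_def by auto
      next
        case vn: False
        then have b: "bs u = bs v" using cf un unfolding conflicting_def by auto
        have "u \<in> A (bs u)" "v \<in> A (bs u)" using u un v vn b unfolding A_def by auto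
        then have "f (bs u) u \<noteq> f (bs u) v" using f ne by (meson inj_on_eq_iff)
        then show ?thesis using un vn b unfolding c_def by auto
      qed
    qed
  qed
  have trm: "ereal (max 0 (1 - \<bar>real_of_int (c u) - real_of_int (c v)\<bar>)) * i u v \<noteq> \<infinity>"
    if u: "u \<in> U" and v: "v \<in> U" for u v
  proof (cases "u = v")
    case True then show ?thesis using i_diag u by simp
  next
    case ne: False
    show ?thesis
    proof (cases "conflicting bs ong prev u v")
      case True
      then have "c u \<noteq> c v" using dist u v by blast
      then have "\<bar>c u - c v\<bar> \<ge> 1" by linarith
      then have "\<bar>real_of_int (c u) - real_of_int (c v)\<bar> \<ge> 1"
        by (metis of_int_1_le_iff of_int_abs of_int_diff)
      then have "max 0 (1 - \<bar>real_of_int (c u) - real_of_int (c v)\<bar>) = 0" by simp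
      then show ?thesis by (simp add: zero_ereal_def[symmetric])
    next
      case False
      then obtain r where "i u v = ereal r" using i_fin[OF u v ne] by (cases "i u v") auto
      then show ?thesis by (metis PInfty_neq_ereal(1) times_ereal.simps(1))
    qed
  qed
  have "(\<Sum>u\<in>U. \<Sum>v\<in>U. ereal (max 0 (1 - \<bar>real_of_int (c u) - real_of_int (c v)\<bar>)) * i u v) \<noteq> \<infinity>"
    using trm by (simp add: sum_Pinfty)
  then obtain r where "(\<Sum>u\<in>U. \<Sum>v\<in>U. ereal (max 0 (1 - \<bar>real_of_int (c u) - real_of_int (c v)\<bar>)) * i u v) = ereal r \<or>
     (\<Sum>u\<in>U. \<Sum>v\<in>U. ereal (max 0 (1 - \<bar>real_of_int (c u) - real_of_int (c v)\<bar>)) * i u v) = - \<infinity>"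
    by (cases "(\<Sum>u\<in>U. \<Sum>v\<in>U. ereal (max 0 (1 - \<bar>real_of_int (c u) - real_of_int (c v)\<bar>)) * i u v)") auto
  then have "P3_obj U i c < \<infinity>" unfolding P3_obj_def by auto
  with feas show ?thesis by blast
qed

end
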